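(* Let $\mathcal{SB}=\langle\mathcal{L},A,\to,\text{supp}\rangle$ be a strongly saturated SBAF. Then every confident weakly coherent argument extension $E\subseteq A$ is a preferred extension of $\langle A,\to\rangle$.
   Context: A language is a triple $\mathcal{L}=\langle L,\overline{\cdot},n\rangle$: $L$ is a nonempty set of sentences; $\overline{\cdot}$ assigns to each $s\in L$ a set $\overline{s}\subseteq L$ of sentences incompatible with $s$, and is symmetric; $n$ is a partial naming function assigning to an argument $a$ a sentence $n(a)\in L$ (if undefined, put $\overline{n(a)}:=\emptyset$), with $\overline{n(\langle\{t\},t\rangle)}=\emptyset$. An argument is a pair $a=\langle Prem(a),Conc(a)\rangle$ with $Prem(a)$ a nonempty finite subset of $L$ and $Conc(a)\in L$; $Sent(a):=Prem(a)\cup\{Conc(a)\}$, $Sent(E):=\bigcup_{a\in E}Sent(a)$. The minimal argument for $s$ is $\langle\{s\},s\rangle$. A set $E$ supports $a$ if $Prem(a)\subseteq Sent(E)$; $E$ contains undercutting information for $a$ if $\overline{n(a)}\cap Sent(E)\neq\emptyset$. Argument $a$ attacks $b$ ($a\to b$) if $Conc(a)\in\overline{s}$ for some $s\in Sent(b)$ or $Conc(a)\in\overline{n(b)}$. An SBAF is $\langle\mathcal{L},A,\to,\text{supp}\rangle$ with $A$ a finite set of arguments. For $E\subseteq A$: $E$ defends $a\in A$ if for every $b\in A$ with $b\to a$ some element of $E$ attacks $b$; $E$ is conflict-free if no $a,b\in E$ with $a\to b$; admissible if conflict-free and defends all its elements; preferred if $\subseteq$-maximal among admissible sets. $E$ is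 weakly coherent if it is admissible and every $a\in A$ supported by $E$, for which $E$ contains no undercutting information and which $E$ defends, belongs to $E$. $S$ is compatible if no $s,t\in S$ with $s\in\overline t$. $Arg_s(S):=\{a\in A\mid Prem(a)\subseteq S\text{ and }\overline{n(a)}\cap S=\emptyset\}$; $R^S(E):=\{a\in A\mid a\in Arg_s(S)\text{ and }E\text{ defends }a\}$. For compatible $S$, $Init(S)$ is the largest admissible subset of $\{a\in A\mid Sent(a)\subseteq S\text{ and }\overline{n(a)}\cap S=\emptyset\}$, and $Arg_w(S)$ is the $\subseteq$-least set $E$ with $Init(S)\subseteq E$ and $R^S(E)=E$. A weakly adequate language extension is a compatible $S\subseteq Sent(A)$ with $Sent(a)\subseteq S$ for all $a\in Arg_w(S)$; it is confident if it is $\subseteq$-maximal among weakly adequate language extensions. An argument extension $E$ is confident weakly coherent if it is weakly coherent and $E=Arg_w(S)$ for some confident weakly adequate language extension $S$. The SBAF is strongly saturated if (i) for every $s\in Sent(A)$ for which some $t\in Sent(A)\cap\overline{s}$ exists, $A$ contains both the minimal argument for $s$ and the minimal argument for $t$, and (ii) for every $u\in Sent(A)$ with $u\in\overline{n(a)}$ for some $a\in A$, $A$ contains the minimal argument for $u$. *)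

theory Defs
  imports Main
begin

text \<open>The language is given by a set L of sentences, an incompatibility map inc
  (the overline operator) and a partial naming function nm (None = undefined).\<close>

type_synonym 's arg = "'s set \<times> 's"

definition Prem :: "'s arg \<Rightarrow> 's set" where "Prem a = fst a"
definition Conc :: "'s arg \<Rightarrow> 's" where "Conc a = snd a"

definition Sent :: "'s arg \<Rightarrow> 's set" where "Sent a = Prem a \<union> {Conc a}"
definition SentE :: "'s arg set \<Rightarrow> 's set" where "SentE E = (\<Union>a\<in>E. Sent a)"

definition minarg :: "'s \<Rightarrow> 's arg" where "minarg s = ({s}, s)"

definition ninc :: "('s \<Rightarrow> 's set) \<Rightarrow> ('s arg \<Rightarrow> 's option) \<Rightarrow> 's arg \<Rightarrow> 's set" where
  "ninc inc nm a = (case nm a of None \<Rightarrow> {} | Some s \<Rightarrow> inc s)"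

definition language :: "'s set \<Rightarrow> ('s \<Rightarrow> 's set) \<Rightarrow> ('s arg \<Rightarrow> 's option) \<Rightarrow> bool" where
  "language L inc nm \<longleftrightarrow> L \<noteq> {}
     \<and> (\<forall>s\<in>L. inc s \<subseteq> L)
     \<and> (\<forall>s\<in>L. \<forall>t\<in>L. t \<in> inc s \<longleftrightarrow> s \<in> inc t)
     \<and> (\<forall>a s. nm a = Some s \<longrightarrow> s \<in> L)
     \<and> (\<forall>t. ninc inc nm (minarg t) = {})"

definition is_argument :: "'s set \<Rightarrow> 's arg \<Rightarrow> bool" where
  "is_argument L a \<longleftrightarrow> finite (Prem a) \<and> Prem a \<noteq> {} \<and> Prem a \<subseteq> L \<and> Conc a \<in> L"

definition attacks :: "('s \<Rightarrow> 's set) \<Rightarrow> ('s arg \<Rightarrow> 's option) \<Rightarrow> 's arg \<Rightarrow> 's arg \<Rightarrow> bool" where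
  "attacks inc nm a b \<longleftrightarrow> (\<exists>s\<in>Sent b. Conc a \<in> inc s) \<or> Conc a \<in> ninc inc nm b"

definition SBAF :: "'s set \<Rightarrow> ('s \<Rightarrow> 's set) \<Rightarrow> ('s arg \<Rightarrow> 's option) \<Rightarrow> 's arg set \<Rightarrow> bool" where
  "SBAF L inc nm A \<longleftrightarrow> language L inc nm \<and> finite A \<and> (\<forall>a\<in>A. is_argument L a)"

definition defends :: "'a set \<Rightarrow> ('a \<Rightarrow> 'a \<Rightarrow> bool) \<Rightarrow> 'a set \<Rightarrow> 'a \<Rightarrow> bool" where
  "defends A att E a \<longleftrightarrow> (\<forall>b\<in>A. att b a \<longrightarrow> (\<exists>c\<in>E. att c b))"

definition conflict_free :: "('a \<Rightarrow> 'a \<Rightarrow> bool) \<Rightarrow> 'a set \<Rightarrow> bool" where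
  "conflict_free att E \<longleftrightarrow> (\<forall>a\<in>E. \<forall>b\<in>E. \<not> att a b)"

definition admissible :: "'a set \<Rightarrow> ('a \<Rightarrow> 'a \<Rightarrow> bool) \<Rightarrow> 'a set \<Rightarrow> bool" where
  "admissible A att E \<longleftrightarrow> E \<subseteq> A \<and> conflict_free att E \<and> (\<forall>a\<in>E. defends A att E a)"

definition preferred :: "'a set \<Rightarrow> ('a \<Rightarrow> 'a \<Rightarrow> bool) \<Rightarrow> 'a set \<Rightarrow> bool" where
  "preferred A att E \<longleftrightarrow> admissible A att E \<and> (\<forall>E'. admissible A att E' \<and> E \<subseteq> E' \<longrightarrow> E' = E)"

context
  fixes inc :: "'s \<Rightarrow> 's set" and nm :: "'s arg \<Rightarrow> 's option" and A :: "'s arg set"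
begin

definition supports :: "'s arg set \<Rightarrow> 's arg \<Rightarrow> bool" where
  "supports E a \<longleftrightarrow> Prem a \<subseteq> SentE E"

definition undercut_info :: "'s arg set \<Rightarrow> 's arg \<Rightarrow> bool" where
  "undercut_info E a \<longleftrightarrow> ninc inc nm a \<inter> SentE E \<noteq> {}"

definition weakly_coherent :: "'s arg set \<Rightarrow> bool" where
  "weakly_coherent E \<longleftrightarrow> admissible A (attacks inc nm) E
     \<and> (\<forall>a\<in>A. supports E a \<and> \<not> undercut_info E a \<and> defends A (attacks inc nm) E a \<longrightarrow> a \<in> E)"

definition compatible :: "'s set \<Rightarrow> bool" where
  "compatible S \<longleftrightarrow> (\<forall>s\<in>S. \<forall>t\<in>S. s \<notin> inc t)"

definition Arg_s :: "'s set \<Rightarrow> 's arg set" where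
  "Arg_s S = {a\<in>A. Prem a \<subseteq> S \<and> ninc inc nm a \<inter> S = {}}"

definition RS :: "'s set \<Rightarrow> 's arg set \<Rightarrow> 's arg set" where
  "RS S E = {a\<in>A. a \<in> Arg_s S \<and> defends A (attacks inc nm) E a}"

definition InitCand :: "'s set \<Rightarrow> 's arg set" where
  "InitCand S = {a\<in>A. Sent a \<subseteq> S \<and> ninc inc nm a \<inter> S = {}}"

definition Init :: "'s set \<Rightarrow> 's arg set" where
  "Init S = (THE E. E \<subseteq> InitCand S \<and> admissible A (attacks inc nm) E
      \<and> (\<forall>E'. E' \<subseteq> InitCand S \<and> admissible A (attacks inc nm) E' \<longrightarrow> E' \<subseteq> E))"

definition Arg_w :: "'s set \<Rightarrow> 's arg set" where
  "Arg_w S = (THE E. Init S \<subseteq> E \<and> RS S E = E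
      \<and> (\<forall>E'. Init S \<subseteq> E' \<and> RS S E' = E' \<longrightarrow> E \<subseteq> E'))"

definition weakly_adequate :: "'s set \<Rightarrow> bool" where
  "weakly_adequate S \<longleftrightarrow> compatible S \<and> S \<subseteq> SentE A \<and> (\<forall>a\<in>Arg_w S. Sent a \<subseteq> S)"

definition confident :: "'s set \<Rightarrow> bool" where
  "confident S \<longleftrightarrow> weakly_adequate S \<and> (\<forall>S'. weakly_adequate S' \<and> S \<subseteq> S' \<longrightarrow> S' = S)"

definition confident_weakly_coherent :: "'s arg set \<Rightarrow> bool" where
  "confident_weakly_coherent E \<longleftrightarrow> weakly_coherent E \<and> (\<exists>S. confident S \<and> E = Arg_w S)"

definition strongly_saturated :: bool where
  "strongly_saturated \<longleftrightarrow>
     (\<forall>s\<in>SentE A. (\<exists>t\<in>SentE A \<inter> inc s. True) \<longrightarrow>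
         minarg s \<in> A \<and> (\<forall>t\<in>SentE A \<inter> inc s. minarg t \<in> A))
     \<and> (\<forall>u\<in>SentE A. (\<exists>a\<in>A. u \<in> ninc inc nm a) \<longrightarrow> minarg u \<in> A)"

end

end

theory Submission
  imports Defs
begin

lemma defends_mono: "defends A att X a \<Longrightarrow> X \<subseteq> Y \<Longrightarrow> defends A att Y a"
  unfolding defends_def by blast

lemma adm_insert:
  assumes "admissible A att F" "a \<in> A" "defends A att F a"
  shows "admissible A att (insert a F)"
proof -
  have F: "F \<subseteq> A" "conflict_free att F" "\<forall>x\<in>F. defends A att F x"
    using assms(1) unfolding admissible_def by auto
  have noatt: "\<not> att c a" if cF: "c \<in> F" for c
  proof
    assume "att c a"
    then obtain d where "d \<in> F" "att d c" using assms(3) F(1) cF unfolding defends_def by blast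
    then show False using F(2) cF unfolding conflict_free_def by blast
  qed
  have cf: "conflict_free att (insert a F)"
    unfolding conflict_free_def
  proof (intro ballI notI)
    fix x y assume xy: "x \<in> insert a F" "y \<in> insert a F" "att x y"
    show False
    proof (cases "x = a")
      case True
      then have "\<exists>c\<in>F. att c a"
      proof (cases "y = a")
        case True then show ?thesis using xy \<open>x = a\<close> assms(2,3) unfolding defends_def by blast
      next
        case False
        then have "y \<in> F" using xy by auto
        then show ?thesis using F(3) xy \<open>x = a\<close> assms(2) unfolding defends_def by blast
      qed
      then show False using noatt by blast
    next
      case False
      then have "x \<in> F" using xy by auto
      then show False using noatt xy F(2) unfolding conflict_free_def by blast
    qed
  qed
  show ?thesis unfolding admissible_def
    using cf F assms(2,3) defends_mono[of A att F _ "insert a F"] by blast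
qed

lemma adm_Union:
  assumes "\<forall>X\<in>C. admissible A att X" "conflict_free att (\<Union>C)"
  shows "admissible A att (\<Union>C)"
  unfolding admissible_def
proof (intro conjI ballI)
  show "\<Union>C \<subseteq> A" using assms(1) unfolding admissible_def by blast
  show "conflict_free att (\<Union>C)" by fact
  fix a assume "a \<in> \<Union>C"
  then obtain X where X: "X \<in> C" "a \<in> X" by blast
  then have "defends A att X a" using assms(1) unfolding admissible_def by blast
  then show "defends A att (\<Union>C) a" using defends_mono[of A att X a "\<Union>C"] X by blast
qed

context
  fixes inc :: "'s \<Rightarrow> 's set" and nm :: "'s arg \<Rightarrow> 's option" and A :: "'s arg set"
begin

lemma InitCand_cf:
  assumes "compatible inc S" "X \<subseteq> InitCand inc nm A S"
  shows "conflict_free (attacks inc nm) X"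
  unfolding conflict_free_def
proof (intro ballI notI)
  fix a b assume ab: "a \<in> X" "b \<in> X" "attacks inc nm a b"
  have a: "Sent a \<subseteq> S" "ninc inc nm a \<inter> S = {}" and b: "Sent b \<subseteq> S" "ninc inc nm b \<inter> S = {}"
    using ab assms(2) unfolding InitCand_def by auto
  have ca: "Conc a \<in> S" using a unfolding Sent_def by auto
  from ab(3) show False unfolding attacks_def
  proof
    assume "\<exists>s\<in>Sent b. Conc a \<in> inc s"
    then obtain s where "s \<in> Sent b" "Conc a \<in> inc s" by blast
    then show False using assms(1) b ca unfolding compatible_def by blast
  next
    assume "Conc a \<in> ninc inc nm b"
    then show False using b ca by blast
  qed
qed

lemma Init_char:
  assumes "compatible inc S"
  shows "Init inc nm A S \<subseteq> InitCand inc nm A S \<and> admissible A (attacks inc nm) (Init inc nm A S)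
     \<and> (\<forall>E'. E' \<subseteq> InitCand inc nm A S \<and> admissible A (attacks inc nm) E' \<longrightarrow> E' \<subseteq> Init inc nm A S)"
proof -
  define M where "M = \<Union>{X. X \<subseteq> InitCand inc nm A S \<and> admissible A (attacks inc nm) X}"
  have M1: "M \<subseteq> InitCand inc nm A S" unfolding M_def by blast
  have M2: "admissible A (attacks inc nm) M"
  proof -
    have cf: "conflict_free (attacks inc nm) M" using InitCand_cf[OF assms M1] .
    have "\<forall>X\<in>{X. X \<subseteq> InitCand inc nm A S \<and> admissible A (attacks inc nm) X}. admissible A (attacks inc nm) X"
      by blast
    from adm_Union[OF this] cf show ?thesis unfolding M_def by blast
  qed
  have M3: "\<forall>E'. E' \<subseteq> InitCand inc nm A S \<and> admissible A (attacks inc nm) E' \<longrightarrow> E' \<subseteq> M"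
    unfolding M_def by (intro allI impI, rule Union_upper, simp)
  have eq: "Init inc nm A S = M"
    unfolding Init_def
  proof (rule the_equality)
    show "M \<subseteq> InitCand inc nm A S \<and> admissible A (attacks inc nm) M \<and> (\<forall>E'. E' \<subseteq> InitCand inc nm A S \<and> admissible A (attacks inc nm) E' \<longrightarrow> E' \<subseteq> M)"
      using M1 M2 M3 by blast
    fix X assume X: "X \<subseteq> InitCand inc nm A S \<and> admissible A (attacks inc nm) X \<and> (\<forall>E'. E' \<subseteq> InitCand inc nm A S \<and> admissible A (attacks inc nm) E' \<longrightarrow> E' \<subseteq> X)"
    have "M \<subseteq> X" using X[THEN conjunct2, THEN conjunct2, rule_format, of M] M1 M2 by blast
    moreover have "X \<subseteq> M"
    proof (rule M3[rule_format])
      show "X \<subseteq> InitCand inc nm A S \<and> admissible A (attacks inc nm) X" using X by (elim conjE) (intro conjI)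
    qed
    ultimately show "X = M" by (intro subset_antisym)
  qed
  show ?thesis unfolding eq using M1 M2 M3 by (intro conjI) assumption+
qed

lemma RS_mono: "X \<subseteq> Y \<Longrightarrow> RS inc nm A S X \<subseteq> RS inc nm A S Y"
proof
  fix a assume X: "X \<subseteq> Y" and "a \<in> RS inc nm A S X"
  then have "a \<in> A" "a \<in> Arg_s inc nm A S" "defends A (attacks inc nm) X a" unfolding RS_def by auto
  then show "a \<in> RS inc nm A S Y" unfolding RS_def using defends_mono[OF _ X] by auto
qed

lemma Argw_char:
  assumes "compatible inc S"
  shows "Init inc nm A S \<subseteq> Arg_w inc nm A S \<and> RS inc nm A S (Arg_w inc nm A S) = Arg_w inc nm A S
     \<and> (\<forall>E'. Init inc nm A S \<subseteq> E' \<and> RS inc nm A S E' = E' \<longrightarrow> Arg_w inc nm A S \<subseteq> E')"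
proof -
  let ?I = "Init inc nm A S"
  let ?R = "RS inc nm A S"
  have I: "?I \<subseteq> InitCand inc nm A S" "admissible A (attacks inc nm) ?I"
    using Init_char[OF assms] by auto
  have IR: "?I \<subseteq> ?R ?I"
  proof
    fix a assume aI: "a \<in> ?I"
    then have "a \<in> InitCand inc nm A S" using I(1) by blast
    then have a1: "a \<in> A" "Sent a \<subseteq> S" "ninc inc nm a \<inter> S = {}" unfolding InitCand_def by auto
    have a2: "Prem a \<subseteq> S" using a1(2) unfolding Sent_def by auto
    have a3: "defends A (attacks inc nm) ?I a" using I(2) aI unfolding admissible_def by blast
    show "a \<in> ?R ?I" unfolding RS_def Arg_s_def using a1 a2 a3 by simp
  qed
  define f where "f = (\<lambda>X. ?I \<union> ?R X)"
  have mf: "mono f" unfolding f_def mono_def using RS_mono by blast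
  define G where "G = lfp f"
  have G: "f G = G" unfolding G_def using lfp_unfold[OF mf] by simp
  have G': "?I \<union> ?R G = G" using G unfolding f_def by simp
  have G1: "?I \<subseteq> G" using G' by (metis Un_upper1)
  have G2: "?R G = G"
  proof
    show "?R G \<subseteq> G" using G' by (metis Un_upper2)
    have "?I \<subseteq> ?R G" using IR RS_mono[OF G1] by (rule subset_trans)
    then have "?I \<union> ?R G \<subseteq> ?R G" by (rule Un_least) simp
    then show "G \<subseteq> ?R G" using G' by simp
  qed
  have G3: "\<forall>E'. ?I \<subseteq> E' \<and> ?R E' = E' \<longrightarrow> G \<subseteq> E'"
  proof (intro allI impI)
    fix E' assume E': "?I \<subseteq> E' \<and> ?R E' = E'"
    then have "f E' \<subseteq> E'" unfolding f_def by simp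
    then show "G \<subseteq> E'" unfolding G_def by (rule lfp_lowerbound)
  qed
  have eq: "Arg_w inc nm A S = G"
    unfolding Arg_w_def
  proof (rule the_equality)
    show "?I \<subseteq> G \<and> ?R G = G \<and> (\<forall>E'. ?I \<subseteq> E' \<and> ?R E' = E' \<longrightarrow> G \<subseteq> E')"
      using G1 G2 G3 by blast
    fix X assume X: "?I \<subseteq> X \<and> ?R X = X \<and> (\<forall>E'. ?I \<subseteq> E' \<and> ?R E' = E' \<longrightarrow> X \<subseteq> E')"
    have "X \<subseteq> G" using X[THEN conjunct2, THEN conjunct2, rule_format, of G] G1 G2 by blast
    moreover have "G \<subseteq> X" using G3[rule_format, of X] X by blast
    ultimately show "X = G" by blast
  qed
  show ?thesis unfolding eq using G1 G2 G3 by (intro conjI) assumption+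
qed


lemma minarg_simps[simp]: "Sent (minarg u) = {u}" "Conc (minarg u) = u" "Prem (minarg u) = {u}"
  by (simp_all add: Sent_def minarg_def Prem_def Conc_def)

lemma SentE_L:
  assumes "\<forall>a\<in>A. is_argument L a"
  shows "SentE A \<subseteq> L"
proof
  fix u assume "u \<in> SentE A"
  then obtain a where a: "a \<in> A" "u \<in> Sent a" unfolding SentE_def by blast
  then have "Prem a \<subseteq> L" "Conc a \<in> L" using assms unfolding is_argument_def by auto
  then show "u \<in> L" using a(2) unfolding Sent_def by blast
qed

lemma Conc_L:
  assumes "\<forall>a\<in>A. is_argument L a" "b \<in> A"
  shows "Conc b \<in> L"
  using assms unfolding is_argument_def by auto

lemma SentE_mono: "X \<subseteq> Y \<Longrightarrow> SentE X \<subseteq> SentE Y"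
  unfolding SentE_def by blast

lemma minarg_Init:
  assumes lang: "language L inc nm" and args: "\<forall>a\<in>A. is_argument L a"
    and comp: "compatible inc S" and uL: "u \<in> L" and uS: "u \<in> S" and mA: "minarg u \<in> A"
  shows "minarg u \<in> Init inc nm A S"
proof -
  have nm0: "ninc inc nm (minarg u) = {}" using lang unfolding language_def by blast
  have sub: "{minarg u} \<subseteq> InitCand inc nm A S"
    unfolding InitCand_def using mA uS nm0 by simp
  have cf: "conflict_free (attacks inc nm) {minarg u}"
    unfolding conflict_free_def attacks_def using nm0 comp uS unfolding compatible_def by simp
  have def: "defends A (attacks inc nm) {minarg u} (minarg u)"
    unfolding defends_def
  proof (intro ballI impI)
    fix b assume bA: "b \<in> A" and att: "attacks inc nm b (minarg u)"
    then have "Conc b \<in> inc u" unfolding attacks_def using nm0 by simp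
    moreover have "Conc b \<in> L" using Conc_L[OF args bA] .
    ultimately have "u \<in> inc (Conc b)" using lang uL unfolding language_def by blast
    then have "attacks inc nm (minarg u) b" unfolding attacks_def Sent_def by auto
    then show "\<exists>c\<in>{minarg u}. attacks inc nm c b" by simp
  qed
  have "admissible A (attacks inc nm) {minarg u}"
    unfolding admissible_def using mA cf def by simp
  then have "{minarg u} \<subseteq> Init inc nm A S" using Init_char[OF comp] sub by blast
  then show ?thesis by simp
qed

end

theorem mainTheorem18:
  fixes L :: "'s set" and inc :: "'s \<Rightarrow> 's set" and nm :: "'s arg \<Rightarrow> 's option"
    and A :: "'s arg set" and E :: "'s arg set"
  assumes "SBAF L inc nm A"
    and "strongly_saturated inc nm A"
    and "E \<subseteq> A"
    and "confident_weakly_coherent inc nm A E"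
  shows "preferred A (attacks inc nm) E"
proof -
  have lang: "language L inc nm" and finA: "finite A" and args: "\<forall>a\<in>A. is_argument L a"
    using assms(1) unfolding SBAF_def by auto
  have sym: "\<And>s t. s \<in> L \<Longrightarrow> t \<in> L \<Longrightarrow> t \<in> inc s \<Longrightarrow> s \<in> inc t"
    using lang unfolding language_def by blast
  have nm0: "\<And>u. ninc inc nm (minarg u) = {}" using lang unfolding language_def by blast
  have SAL: "SentE A \<subseteq> L" using SentE_L[OF args] .
  have sat1: "\<And>x y. x \<in> SentE A \<Longrightarrow> y \<in> SentE A \<Longrightarrow> y \<in> inc x \<Longrightarrow> minarg y \<in> A"
    using assms(2) unfolding strongly_saturated_def by blast
  have sat2: "\<And>u a. u \<in> SentE A \<Longrightarrow> a \<in> A \<Longrightarrow> u \<in> ninc inc nm a \<Longrightarrow> minarg u \<in> A"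
    using assms(2) unfolding strongly_saturated_def by blast
  have wc: "weakly_coherent inc nm A E" and exS: "\<exists>S. confident inc nm A S \<and> E = Arg_w inc nm A S"
    using assms(4) unfolding confident_weakly_coherent_def by auto
  then obtain S where conf: "confident inc nm A S" and ES: "E = Arg_w inc nm A S" by blast
  have admE: "admissible A (attacks inc nm) E" using wc unfolding weakly_coherent_def by blast
  have wa: "weakly_adequate inc nm A S" and maxS: "\<And>S'. weakly_adequate inc nm A S' \<Longrightarrow> S \<subseteq> S' \<Longrightarrow> S' = S"
    using conf unfolding confident_def by auto
  have compS: "compatible inc S" and SA: "S \<subseteq> SentE A" using wa unfolding weakly_adequate_def by auto
  have ArgwS: "Init inc nm A S \<subseteq> Arg_w inc nm A S" using Argw_char[OF compS] by blast
  have "\<forall>E'. admissible A (attacks inc nm) E' \<and> E \<subseteq> E' \<longrightarrow> E' = E"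
  proof (intro allI impI, elim conjE)
    fix E' assume admE': "admissible A (attacks inc nm) E'" and EE': "E \<subseteq> E'"
    define P where "P = {G. G \<subseteq> A \<and> admissible A (attacks inc nm) G \<and> E' \<subseteq> G}"
    have finP: "finite P" unfolding P_def using finA by (simp add: finite_subset[OF _ iffD2[OF finite_Pow_iff finA]] subset_eq)
    have "E' \<in> P" unfolding P_def using admE' unfolding admissible_def by blast
    then have "P \<noteq> {}" by blast
    from finite_has_maximal[OF finP this] obtain F where FP: "F \<in> P"
      and Fmax0: "\<forall>G\<in>P. F \<subseteq> G \<longrightarrow> F = G" by blast
    have admF: "admissible A (attacks inc nm) F" and E'F: "E' \<subseteq> F" and FA: "F \<subseteq> A"
      using FP unfolding P_def by auto
    have Fmax: "G = F" if "admissible A (attacks inc nm) G" "F \<subseteq> G" for G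
    proof -
      have "G \<in> P" unfolding P_def using that E'F unfolding admissible_def by blast
      then show ?thesis using Fmax0 that(2) by blast
    qed
    have cfF: "conflict_free (attacks inc nm) F" and defF: "\<forall>b\<in>F. defends A (attacks inc nm) F b"
      using admF unfolding admissible_def by auto
    have EF: "E \<subseteq> F" using EE' E'F by blast
    define T where "T = SentE F"
    define S' where "S' = S \<union> T"
    have TA: "T \<subseteq> SentE A" unfolding T_def using SentE_mono[OF FA] .
    have S'A: "S' \<subseteq> SentE A" unfolding S'_def using TA SA by blast
    have S'L: "S' \<subseteq> L" using S'A SAL by blast
    have mS: "minarg u \<in> F" if "u \<in> S" "minarg u \<in> A" for u
    proof -
      have "u \<in> L" using that(1) SA SAL by blast
      then have "minarg u \<in> Init inc nm A S" using minarg_Init[OF lang args compS _ that] by blast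
      then show ?thesis using ArgwS ES EF by blast
    qed
    have K: False if uS': "u \<in> S'" and mA: "minarg u \<in> A" and bF: "b \<in> F"
      and att: "attacks inc nm (minarg u) b" for u b
    proof (cases "u \<in> S")
      case True
      then have "minarg u \<in> F" using mS mA by blast
      then show False using cfF bF att unfolding conflict_free_def by blast
    next
      case False
      then have "u \<in> T" using uS' unfolding S'_def by blast
      then obtain d where dF: "d \<in> F" and ud: "u \<in> Sent d" unfolding T_def SentE_def by blast
      obtain c where cF: "c \<in> F" and catt: "attacks inc nm c (minarg u)"
        using defF bF mA att unfolding defends_def by blast
      have "Conc c \<in> inc u" using catt nm0 unfolding attacks_def by simp
      then have "attacks inc nm c d" using ud unfolding attacks_def by blast
      then show False using cfF cF dF unfolding conflict_free_def by blast
    qed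
    have KT: False if h: "t \<in> T" "s \<in> S'" "s \<in> inc t" for s t
    proof -
      obtain b where bF: "b \<in> F" and tb: "t \<in> Sent b" using h(1) unfolding T_def SentE_def by blast
      have "minarg s \<in> A" using sat1[of t s] h TA S'A by blast
      moreover have "attacks inc nm (minarg s) b" using tb h(3) unfolding attacks_def by auto
      ultimately show False using K[OF h(2) _ bF] by blast
    qed
    have compS': "compatible inc S'"
      unfolding compatible_def
    proof (intro ballI notI)
      fix s t assume sS': "s \<in> S'" and tS': "t \<in> S'" and st: "s \<in> inc t"
      show False
      proof (cases "t \<in> T")
        case True then show False using KT sS' st by blast
      next
        case tT: False
        show False
        proof (cases "s \<in> T")
          case True
          have "t \<in> inc s" using sym[of t s] sS' tS' S'L st by blast
          then show False using KT[OF True tS'] by blast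
        next
          case False
          then have "s \<in> S" "t \<in> S" using sS' tS' tT unfolding S'_def by auto
          then show False using compS st unfolding compatible_def by blast
        qed
      qed
    qed
    have FIC: "F \<subseteq> InitCand inc nm A S'"
    proof
      fix b assume bF: "b \<in> F"
      have sb: "Sent b \<subseteq> S'" using bF unfolding S'_def T_def SentE_def by blast
      have nb: "ninc inc nm b \<inter> S' = {}"
      proof (rule ccontr)
        assume "ninc inc nm b \<inter> S' \<noteq> {}"
        then obtain u where u1: "u \<in> ninc inc nm b" and u2: "u \<in> S'" by blast
        have "minarg u \<in> A" using sat2[of u b] u1 u2 S'A bF FA by blast
        moreover have "attacks inc nm (minarg u) b" using u1 unfolding attacks_def by simp
        ultimately show False using K[OF u2 _ bF] by blast
      qed
      show "b \<in> InitCand inc nm A S'" unfolding InitCand_def using bF FA sb nb by blast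
    qed
    have IC': "Init inc nm A S' \<subseteq> InitCand inc nm A S' \<and> admissible A (attacks inc nm) (Init inc nm A S')
     \<and> (\<forall>E'. E' \<subseteq> InitCand inc nm A S' \<and> admissible A (attacks inc nm) E' \<longrightarrow> E' \<subseteq> Init inc nm A S')"
      using Init_char[OF compS'] .
    have FI: "F \<subseteq> Init inc nm A S'" using IC' FIC admF by blast
    have IF: "Init inc nm A S' = F" using Fmax[of "Init inc nm A S'"] IC' FI by blast
    have RSF: "RS inc nm A S' F = F"
    proof
      show "RS inc nm A S' F \<subseteq> F"
      proof
        fix a assume "a \<in> RS inc nm A S' F"
        then have aA: "a \<in> A" and da: "defends A (attacks inc nm) F a" unfolding RS_def by auto
        have "insert a F = F" using Fmax[OF adm_insert[OF admF aA da]] by blast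
        then show "a \<in> F" by blast
      qed
      show "F \<subseteq> RS inc nm A S' F"
      proof
        fix b assume bF: "b \<in> F"
        then have "b \<in> InitCand inc nm A S'" using FIC by blast
        then have b1: "b \<in> A" "Sent b \<subseteq> S'" "ninc inc nm b \<inter> S' = {}" unfolding InitCand_def by auto
        have b2: "Prem b \<subseteq> S'" using b1(2) unfolding Sent_def by blast
        show "b \<in> RS inc nm A S' F" unfolding RS_def Arg_s_def using b1 b2 bF defF by blast
      qed
    qed
    have AC': "Init inc nm A S' \<subseteq> Arg_w inc nm A S' \<and> RS inc nm A S' (Arg_w inc nm A S') = Arg_w inc nm A S'
     \<and> (\<forall>E'. Init inc nm A S' \<subseteq> E' \<and> RS inc nm A S' E' = E' \<longrightarrow> Arg_w inc nm A S' \<subseteq> E')"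
      using Argw_char[OF compS'] .
    have AwF: "Arg_w inc nm A S' = F"
    proof
      show "Arg_w inc nm A S' \<subseteq> F" using AC' IF RSF by blast
      show "F \<subseteq> Arg_w inc nm A S'" using AC' IF by blast
    qed
    have "weakly_adequate inc nm A S'"
      unfolding weakly_adequate_def
    proof (intro conjI ballI)
      show "compatible inc S'" by fact
      show "S' \<subseteq> SentE A" by fact
      fix a assume "a \<in> Arg_w inc nm A S'"
      then have "a \<in> F" using AwF by simp
      then show "Sent a \<subseteq> S'" unfolding S'_def T_def SentE_def by blast
    qed
    then have "S' = S" using maxS unfolding S'_def by blast
    then have "E = F" using ES AwF by simp
    then show "E' = E" using E'F EE' by blast
  qed
  then show ?thesis unfolding preferred_def using admE by blast
qed

end
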